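(* Let $G=(V,E,p,(V_{E},V_{O}))$ be a parity game and let $\rho: V\to\mathbb{M}$ be a game parity progress measure of $G$. Then for every vertex $v\in V$ there is a positional strategy $\sigma_{E}$ of player Even such that every play $\pi$ starting in $v$ and consistent with $\sigma_{E}$ satisfies $\theta(\pi)\le\rho(v)$.
   Context: A parity game $G=(V,E,p,(V_{E},V_{O}))$ consists of a finite set $V$ of vertices partitioned into $V_{E}$ (owned by player Even) and $V_{O}$ (owned by player Odd), a total edge relation $E\subseteq V\times V$ (every vertex has a successor), and a priority function $p:V\to\mathbb{N}$. Write $\mathrm{post}(v)=\{w:(v,w)\in E\}$ and $V_i=\{v: p(v)=i\}$. A play is an infinite path $\pi=\pi_0\pi_1\cdots$ in the graph; Even wins it iff the least priority occurring infinitely often is even, otherwise Odd wins it. A strategy of player $X$ is a partial function $\sigma:V^+\to V$, defined only on finite paths $u_1\cdots u_n$ with $u_n$ owned by $X$, and then $\sigma(u_1\cdots u_n)\in\mathrm{post}(u_n)$; it is positional if its value depends only on the last vertex. A play is consistent with $\sigma$ if $u_{n+1}=\sigma(u_1\cdots u_n)$ whenever the latter is defined. Let $d$ be one more than the largest priority in $G$. $\mathbb{M}$ is the set consisting of an extra element $\top$ together with all tuples $(m_0,\dots,m_{d-1})\in\mathbb{N}^d$ with $m_i=0$ for even $i$ and $m_i\le|V_i|$ for odd $i$; $\mathbb{M}_{ext}$ is $\{\top\}$ together with all tuples in $\mathbb{N}^d$ that are $0$ at even positions. Tuples are ordered lexicographically and $\top$ is strictly greater than every tuple. For a position $i$, $m<_i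 m'$ means $(m_0,\dots,m_i)<(m'_0,\dots,m'_i)$ lexicographically (with $\alpha<_i\top$ for tuples $\alpha$ and $\top=_i\top$), and $m=_i m'$ means the tuples agree on positions $0,\dots,i$; $\le_i,\ge_i,>_i$ are derived accordingly. For $\rho:V\to\mathbb{M}$ and $w\in\mathrm{post}(v)$, $\mathrm{Prog}(\rho,v,w)$ is the least $m\in\mathbb{M}$ such that $m\ge_{p(v)}\rho(w)$ if $p(v)$ is even, and such that $m>_{p(v)}\rho(w)$ or $m=\rho(w)=\top$ if $p(v)$ is odd. $\rho$ is a game parity progress measure if for every $v\in V_{E}$ there is $w\in\mathrm{post}(v)$ with $\rho(v)\ge_{p(v)}\mathrm{Prog}(\rho,v,w)$, and for every $v\in V_{O}$ and all $w\in\mathrm{post}(v)$, $\rho(v)\ge_{p(v)}\mathrm{Prog}(\rho,v,w)$. Play value: a stretch of a play is a finite contiguous subsequence; for a priority $k$, a $k$-dominated stretch is one whose minimal priority is $k$, and its degree is the number of its vertices of priority $k$. The value $\theta(\pi)\in\mathbb{M}_{ext}$ of a play $\pi$ is $\top$ if Odd wins $\pi$; otherwise it is the tuple which is $0$ at even positions and whose entry at each odd position $i$ is the degree of the maximal $i$-dominated stretch that is a prefix of $\pi$ (and $0$ if no prefix is $i$-dominated). *)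

theory Defs
  imports Main
begin

text \<open>A parity game is given by a vertex set V, an edge relation E, the set VE of
vertices owned by Even (Odd owns V - VE) and a priority function p.\<close>

definition parity_game :: "'v set \<Rightarrow> ('v \<times> 'v) set \<Rightarrow> 'v set \<Rightarrow> ('v \<Rightarrow> nat) \<Rightarrow> bool" where
  "parity_game V E VE p \<longleftrightarrow>
     finite V \<and> E \<subseteq> V \<times> V \<and> (\<forall>v\<in>V. \<exists>w. (v, w) \<in> E) \<and> VE \<subseteq> V"

definition post :: "('v \<times> 'v) set \<Rightarrow> 'v \<Rightarrow> 'v set" where
  "post E v = {w. (v, w) \<in> E}"

definition dim :: "'v set \<Rightarrow> ('v \<Rightarrow> nat) \<Rightarrow> nat" where
  "dim V p = Suc (Max (p ` V))"

datatype mval = Top | Tup "nat list"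

definition Mset :: "'v set \<Rightarrow> ('v \<Rightarrow> nat) \<Rightarrow> mval set" where
  "Mset V p = insert Top {Tup m | m. length m = dim V p
      \<and> (\<forall>i < dim V p. even i \<longrightarrow> m ! i = 0)
      \<and> (\<forall>i < dim V p. odd i \<longrightarrow> m ! i \<le> card {v \<in> V. p v = i})}"

definition Mext :: "'v set \<Rightarrow> ('v \<Rightarrow> nat) \<Rightarrow> mval set" where
  "Mext V p = insert Top {Tup m | m. length m = dim V p
      \<and> (\<forall>i < dim V p. even i \<longrightarrow> m ! i = 0)}"

definition lex_le :: "nat list \<Rightarrow> nat list \<Rightarrow> bool" where
  "lex_le xs ys \<longleftrightarrow> xs = ys \<or>
     (\<exists>k. k < length xs \<and> k < length ys \<and> take k xs = take k ys \<and> xs ! k < ys ! k)"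

fun mle :: "mval \<Rightarrow> mval \<Rightarrow> bool" where
  "mle _ Top = True"
| "mle Top (Tup _) = False"
| "mle (Tup a) (Tup b) = lex_le a b"

fun le_at :: "nat \<Rightarrow> mval \<Rightarrow> mval \<Rightarrow> bool" where
  "le_at i _ Top = True"
| "le_at i Top (Tup _) = False"
| "le_at i (Tup a) (Tup b) = lex_le (take (Suc i) a) (take (Suc i) b)"

definition less_at :: "nat \<Rightarrow> mval \<Rightarrow> mval \<Rightarrow> bool" where
  "less_at i m m' \<longleftrightarrow> le_at i m m' \<and> \<not> le_at i m' m"

definition ge_at :: "nat \<Rightarrow> mval \<Rightarrow> mval \<Rightarrow> bool" where
  "ge_at i m m' \<longleftrightarrow> le_at i m' m"

definition prog_cond :: "('v \<Rightarrow> nat) \<Rightarrow> ('v \<Rightarrow> mval) \<Rightarrow> 'v \<Rightarrow> 'v \<Rightarrow> mval \<Rightarrow> bool" where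
  "prog_cond p \<rho> v w m \<longleftrightarrow>
     (if even (p v) then ge_at (p v) m (\<rho> w)
      else less_at (p v) (\<rho> w) m \<or> (m = Top \<and> \<rho> w = Top))"

definition Prog :: "'v set \<Rightarrow> ('v \<Rightarrow> nat) \<Rightarrow> ('v \<Rightarrow> mval) \<Rightarrow> 'v \<Rightarrow> 'v \<Rightarrow> mval" where
  "Prog V p \<rho> v w = (THE m. m \<in> Mset V p \<and> prog_cond p \<rho> v w m
       \<and> (\<forall>m' \<in> Mset V p. prog_cond p \<rho> v w m' \<longrightarrow> mle m m'))"

definition game_ppm :: "'v set \<Rightarrow> ('v \<times> 'v) set \<Rightarrow> 'v set \<Rightarrow> ('v \<Rightarrow> nat) \<Rightarrow> ('v \<Rightarrow> mval) \<Rightarrow> bool" where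
  "game_ppm V E VE p \<rho> \<longleftrightarrow>
     (\<forall>v \<in> V. \<rho> v \<in> Mset V p)
   \<and> (\<forall>v \<in> VE. \<exists>w \<in> post E v. ge_at (p v) (\<rho> v) (Prog V p \<rho> v w))
   \<and> (\<forall>v \<in> V - VE. \<forall>w \<in> post E v. ge_at (p v) (\<rho> v) (Prog V p \<rho> v w))"

definition is_play :: "('v \<times> 'v) set \<Rightarrow> (nat \<Rightarrow> 'v) \<Rightarrow> bool" where
  "is_play E \<pi> \<longleftrightarrow> (\<forall>n. (\<pi> n, \<pi> (Suc n)) \<in> E)"

definition even_wins :: "('v \<Rightarrow> nat) \<Rightarrow> (nat \<Rightarrow> 'v) \<Rightarrow> bool" where
  "even_wins p \<pi> \<longleftrightarrow> even (Min {k. \<exists>\<^sub>\<infinity>n. p (\<pi> n) = k})"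

definition positional_strategy_even :: "('v \<times> 'v) set \<Rightarrow> 'v set \<Rightarrow> ('v \<Rightarrow> 'v) \<Rightarrow> bool" where
  "positional_strategy_even E VE \<sigma> \<longleftrightarrow> (\<forall>v \<in> VE. \<sigma> v \<in> post E v)"

definition consistent_pos :: "'v set \<Rightarrow> ('v \<Rightarrow> 'v) \<Rightarrow> (nat \<Rightarrow> 'v) \<Rightarrow> bool" where
  "consistent_pos VE \<sigma> \<pi> \<longleftrightarrow> (\<forall>n. \<pi> n \<in> VE \<longrightarrow> \<pi> (Suc n) = \<sigma> (\<pi> n))"

definition dominated_prefix :: "('v \<Rightarrow> nat) \<Rightarrow> (nat \<Rightarrow> 'v) \<Rightarrow> nat \<Rightarrow> nat \<Rightarrow> bool" where
  "dominated_prefix p \<pi> i k \<longleftrightarrow> 0 < k \<and> Min ((\<lambda>n. p (\<pi> n)) ` {..<k}) = i"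

definition prefix_degree :: "('v \<Rightarrow> nat) \<Rightarrow> (nat \<Rightarrow> 'v) \<Rightarrow> nat \<Rightarrow> nat \<Rightarrow> nat" where
  "prefix_degree p \<pi> i k = card {n. n < k \<and> p (\<pi> n) = i}"

definition max_dom_degree :: "('v \<Rightarrow> nat) \<Rightarrow> (nat \<Rightarrow> 'v) \<Rightarrow> nat \<Rightarrow> nat" where
  "max_dom_degree p \<pi> i =
     Max (insert 0 {prefix_degree p \<pi> i k | k. dominated_prefix p \<pi> i k})"

definition theta :: "'v set \<Rightarrow> ('v \<Rightarrow> nat) \<Rightarrow> (nat \<Rightarrow> 'v) \<Rightarrow> mval" where
  "theta V p \<pi> = (if \<not> even_wins p \<pi> then Top
     else Tup (map (\<lambda>i. if even i then 0 else max_dom_degree p \<pi> i) [0..<dim V p]))"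

end

theory Submission
  imports Defs "HOL-Library.Infinite_Set"
begin

fun enc :: "nat \<Rightarrow> nat list \<Rightarrow> nat" where
  "enc b [] = 0"
| "enc b (x # xs) = x * b ^ length xs + enc b xs"

fun untup :: "mval \<Rightarrow> nat list" where
  "untup (Tup c) = c"
| "untup Top = []"

lemma enc_bound: "\<forall>x\<in>set xs. x < b \<Longrightarrow> enc b xs < b ^ length xs"
proof (induction xs)
  case Nil then show ?case by simp
next
  case (Cons x xs)
  then have h: "enc b xs < b ^ length xs" "x < b" by auto
  then have "x * b ^ length xs + enc b xs < x * b ^ length xs + b ^ length xs" by simp
  also have "... = (x+1) * b ^ length xs" by simp
  also have "... \<le> b * b ^ length xs" using h(2) by (intro mult_right_mono) auto
  finally show ?case by simp
qed

lemma enc_snoc: "enc b (xs @ [z]) = enc b xs * b + z"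
  by (induction xs) (auto simp: algebra_simps)

lemma lex_le_Cons: "lex_le (x # xs) (y # ys) \<longleftrightarrow> x < y \<or> (x = y \<and> lex_le xs ys)"
proof
  assume "lex_le (x # xs) (y # ys)"
  then consider "x # xs = y # ys" | k where "k < Suc (length xs)" "k < Suc (length ys)"
     "take k (x#xs) = take k (y#ys)" "(x#xs)!k < (y#ys)!k"
    unfolding lex_le_def by auto
  then show "x < y \<or> (x = y \<and> lex_le xs ys)"
  proof cases
    case 1 then show ?thesis by (simp add: lex_le_def)
  next
    case (2 k)
    show ?thesis
    proof (cases k)
      case 0 then show ?thesis using 2 by simp
    next
      case (Suc k')
      then show ?thesis using 2 unfolding lex_le_def by auto
    qed
  qed
next
  assume "x < y \<or> (x = y \<and> lex_le xs ys)"
  then consider "x < y" | "x = y" "xs = ys" | k where "x = y" "k < length xs" "k < length ys"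
      "take k xs = take k ys" "xs!k < ys!k"
    unfolding lex_le_def by auto
  then show "lex_le (x # xs) (y # ys)"
  proof cases
    case 1 then show ?thesis unfolding lex_le_def by (intro disjI2 exI[of _ 0]) auto
  next
    case 2 then show ?thesis by (simp add: lex_le_def)
  next
    case (3 k) then show ?thesis unfolding lex_le_def by (intro disjI2 exI[of _ "Suc k"]) auto
  qed
qed

lemma lex_le_enc:
  assumes "length xs = length ys" "\<forall>x\<in>set xs. x < b" "\<forall>y\<in>set ys. y < b"
  shows "lex_le xs ys \<longleftrightarrow> enc b xs \<le> enc b ys"
  using assms
proof (induction xs arbitrary: ys)
  case Nil then show ?case by (simp add: lex_le_def)
next
  case (Cons x xs ys)
  then obtain y ys' where ys: "ys = y # ys'" by (cases ys) auto
  with Cons.prems have len: "length xs = length ys'" and xb: "x < b" and yb: "y < b"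
    and bx: "\<forall>x\<in>set xs. x < b" and by': "\<forall>y\<in>set ys'. y < b" by auto
  have IH: "lex_le xs ys' \<longleftrightarrow> enc b xs \<le> enc b ys'" using Cons.IH len bx by' by blast
  have e1: "enc b xs < b ^ length xs" using enc_bound bx by blast
  have e2: "enc b ys' < b ^ length xs" using enc_bound[OF by'] len by simp
  let ?P = "b ^ length xs"
  have A: "u * ?P + e < w * ?P + f" if "u < w" "e < ?P" for u w e f :: nat
  proof -
    have "u * ?P + e < (u+1) * ?P" using that by simp
    also have "... \<le> w * ?P" using that by (intro mult_right_mono) auto
    finally show ?thesis by simp
  qed
  have key: "x * ?P + enc b xs \<le> y * ?P + enc b ys' \<longleftrightarrow> x < y \<or> (x = y \<and> enc b xs \<le> enc b ys')"
  proof (cases x y rule: linorder_cases)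
    case less then show ?thesis using A[OF less e1, of "enc b ys'"] by simp
  next
    case equal then show ?thesis by simp
  next
    case greater then show ?thesis using A[OF greater e2, of "enc b xs"] by simp
  qed
  show ?case using ys IH key lex_le_Cons len by simp
qed

lemma lex_le_antisym: "lex_le xs ys \<Longrightarrow> lex_le ys xs \<Longrightarrow> xs = ys"
proof (rule ccontr)
  assume a: "lex_le xs ys" "lex_le ys xs" "xs \<noteq> ys"
  then obtain k1 where k1: "k1 < length xs" "k1 < length ys" "take k1 xs = take k1 ys" "xs!k1 < ys!k1"
    unfolding lex_le_def by auto
  from a obtain k2 where k2: "k2 < length xs" "k2 < length ys" "take k2 ys = take k2 xs" "ys!k2 < xs!k2"
    unfolding lex_le_def by auto
  show False
  proof (cases k1 k2 rule: linorder_cases)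
    case less
    then have "take k2 xs ! k1 = take k2 ys ! k1" using k2 by simp
    then show False using less k1 by simp
  next
    case equal then show False using k1 k2 by simp
  next
    case greater
    then have "take k1 xs ! k2 = take k1 ys ! k2" using k1 by simp
    then show False using greater k2 by simp
  qed
qed

lemma lex_le_take:
  assumes "lex_le xs ys" shows "lex_le (take n xs) (take n ys)"
proof -
  from assms consider "xs = ys" | k where "k < length xs" "k < length ys"
      "take k xs = take k ys" "xs!k < ys!k"
    unfolding lex_le_def by auto
  then show ?thesis
  proof cases
    case 1 then show ?thesis by (simp add: lex_le_def)
  next
    case (2 k)
    show ?thesis
    proof (cases "k < n")
      case True
      have "take k (take n xs) = take k (take n ys)" using 2 True by (simp add: min_def)
      then show ?thesis unfolding lex_le_def using 2 True
        by (intro disjI2 exI[of _ k]) auto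
    next
      case False
      then have "take n xs = take n ys" using 2
        by (metis min.absorb1 not_less take_take)
      then show ?thesis by (simp add: lex_le_def)
    qed
  qed
qed

lemma lex_take_mono:
  assumes "lex_le (take (Suc q) x) (take (Suc q) y)" "i \<le> q"
  shows "lex_le (take (Suc i) x) (take (Suc i) y)"
proof -
  have "lex_le (take (Suc i) (take (Suc q) x)) (take (Suc i) (take (Suc q) y))"
    using lex_le_take[OF assms(1)] .
  then show ?thesis using assms(2) by (simp add: min_def)
qed

lemma lex_le_take_Suc:
  assumes "lex_le (take i a) (take i b)" "i < length a" "i < length b"
    and "take i a \<noteq> take i b \<or> a!i \<le> b!i"
  shows "lex_le (take (Suc i) a) (take (Suc i) b)"
proof (cases "take i a = take i b")
  case True
  then have ab: "a!i \<le> b!i" using assms(4) by simp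
  have ta: "take (Suc i) a = take i a @ [a!i]" using assms(2) by (simp add: take_Suc_conv_app_nth)
  have tb: "take (Suc i) b = take i b @ [b!i]" using assms(3) by (simp add: take_Suc_conv_app_nth)
  show ?thesis
  proof (cases "a!i = b!i")
    case True then show ?thesis using ta tb \<open>take i a = take i b\<close> by (simp add: lex_le_def)
  next
    case False
    then have "a!i < b!i" using ab by simp
    then show ?thesis unfolding lex_le_def using assms(2,3) True
      by (intro disjI2 exI[of _ i]) (simp add: min_def)
  qed
next
  case False
  then obtain k where k: "k < length (take i a)" "k < length (take i b)"
    "take k (take i a) = take k (take i b)" "take i a ! k < take i b ! k"
    using assms(1) unfolding lex_le_def by auto
  then have "k < i" by simp
  then show ?thesis unfolding lex_le_def using k assms(2,3)
    by (intro disjI2 exI[of _ k]) (simp add: min_def)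
qed

lemma mle_antisym: "mle x y \<Longrightarrow> mle y x \<Longrightarrow> x = y"
  by (cases x; cases y) (auto intro: lex_le_antisym)

lemma Mset_Tup:
  assumes "finite V" "Tup m \<in> Mset V p"
  shows "length m = dim V p" "\<forall>x\<in>set m. x < Suc (card V)"
proof -
  have h: "length m = dim V p" "\<forall>i < dim V p. even i \<longrightarrow> m ! i = 0"
      "\<forall>i < dim V p. odd i \<longrightarrow> m ! i \<le> card {v \<in> V. p v = i}"
    using assms(2) unfolding Mset_def by auto
  then show "length m = dim V p" by simp
  show "\<forall>x\<in>set m. x < Suc (card V)"
  proof
    fix x assume "x \<in> set m"
    then obtain i where i: "i < length m" "m ! i = x" by (auto simp: in_set_conv_nth)
    have "card {v \<in> V. p v = i} \<le> card V" using assms(1) by (intro card_mono) auto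
    then show "x < Suc (card V)" using h i by (cases "even i") auto
  qed
qed

lemma finite_Mset: assumes "finite V" shows "finite (Mset V p)"
proof -
  have "Mset V p \<subseteq> insert Top (Tup ` {xs. set xs \<subseteq> {..<Suc (card V)} \<and> length xs = dim V p})"
  proof
    fix m assume m: "m \<in> Mset V p"
    show "m \<in> insert Top (Tup ` {xs. set xs \<subseteq> {..<Suc (card V)} \<and> length xs = dim V p})"
    proof (cases m)
      case Top then show ?thesis by simp
    next
      case (Tup c)
      then show ?thesis using Mset_Tup[OF assms, of c p] m by auto
    qed
  qed
  moreover have "finite (insert Top (Tup ` {xs. set xs \<subseteq> {..<Suc (card V)} \<and> length xs = dim V p}))"
    by (intro finite.insertI finite_imageI finite_lists_length_eq) auto
  ultimately show ?thesis by (rule finite_subset)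
qed

fun code :: "nat \<Rightarrow> nat \<Rightarrow> mval \<Rightarrow> nat" where
  "code b d Top = b ^ d"
| "code b d (Tup m) = enc b m"

lemma mle_code:
  assumes "finite V" "x \<in> Mset V p" "y \<in> Mset V p"
  shows "mle x y \<longleftrightarrow> code (Suc (card V)) (dim V p) x \<le> code (Suc (card V)) (dim V p) y"
proof (cases x)
  case Top
  then show ?thesis
  proof (cases y)
    case (Tup c)
    have "enc (Suc (card V)) c < Suc (card V) ^ dim V p"
      using enc_bound Mset_Tup[OF assms(1)] assms(3) Tup by metis
    then show ?thesis using Top Tup by simp
  qed simp
next
  case (Tup c)
  note cx = Mset_Tup[OF assms(1)] assms(2) Tup
  then show ?thesis
  proof (cases y)
    case Top
    have "enc (Suc (card V)) c < Suc (card V) ^ dim V p"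
      using enc_bound Mset_Tup[OF assms(1)] assms(2) Tup by metis
    then show ?thesis using Top Tup by simp
  next
    case (Tup c')
    have "lex_le c c' \<longleftrightarrow> enc (Suc (card V)) c \<le> enc (Suc (card V)) c'"
      using lex_le_enc Mset_Tup[OF assms(1)] assms(2,3) Tup \<open>x = Tup c\<close> by metis
    then show ?thesis using Tup \<open>x = Tup c\<close> by simp
  qed
qed

lemma prog_cond_Top: "prog_cond p \<rho> v w Top"
  by (cases "\<rho> w") (auto simp: prog_cond_def ge_at_def less_at_def)

lemma Prog_props:
  assumes "finite V"
  shows "Prog V p \<rho> v w \<in> Mset V p \<and> prog_cond p \<rho> v w (Prog V p \<rho> v w)"
proof -
  let ?Q = "\<lambda>m. m \<in> Mset V p \<and> prog_cond p \<rho> v w m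
       \<and> (\<forall>m' \<in> Mset V p. prog_cond p \<rho> v w m' \<longrightarrow> mle m m')"
  let ?c = "code (Suc (card V)) (dim V p)"
  have "Top \<in> Mset V p \<and> prog_cond p \<rho> v w Top" using prog_cond_Top by (simp add: Mset_def)
  then obtain m0 where m0: "m0 \<in> Mset V p \<and> prog_cond p \<rho> v w m0"
    "\<forall>y. y \<in> Mset V p \<and> prog_cond p \<rho> v w y \<longrightarrow> ?c m0 \<le> ?c y"
    using ex_has_least_nat[of "\<lambda>m. m \<in> Mset V p \<and> prog_cond p \<rho> v w m" Top ?c] by blast
  have Qm0: "?Q m0" using m0 mle_code[OF assms] by blast
  have "\<exists>!m. ?Q m"
  proof
    show "?Q m0" by (rule Qm0)
    fix m assume "?Q m"
    then show "m = m0" using Qm0 mle_antisym by blast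
  qed
  then have "?Q (Prog V p \<rho> v w)" unfolding Prog_def by (rule theI')
  then show ?thesis by blast
qed

lemma lex_le_trans_b:
  assumes "length x = length y" "length y = length z"
    "\<forall>u\<in>set x. u < b" "\<forall>u\<in>set y. u < b" "\<forall>u\<in>set z. u < b"
    "lex_le x y" "lex_le y z"
  shows "lex_le x z"
proof -
  have "enc b x \<le> enc b y" using lex_le_enc[OF assms(1,3,4)] assms(6) by simp
  moreover have "enc b y \<le> enc b z" using lex_le_enc[OF assms(2,4,5)] assms(7) by simp
  ultimately have "enc b x \<le> enc b z" by simp
  moreover have "length x = length z" using assms(1,2) by simp
  ultimately show ?thesis using lex_le_enc[of x z b] assms(3,5) by simp
qed

lemma bnd_take: "\<forall>u\<in>set xs. u < b \<Longrightarrow> \<forall>u\<in>set (take n xs). u < b"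
  by (meson in_set_takeD)

lemma step_lemma:
  assumes fin: "finite V" and rw: "\<rho> w \<in> Mset V p" and rv: "\<rho> v = Tup a" "Tup a \<in> Mset V p"
    and ge: "ge_at (p v) (\<rho> v) (Prog V p \<rho> v w)"
  shows "\<exists>c. \<rho> w = Tup c \<and> lex_le (take (Suc (p v)) c) (take (Suc (p v)) a)
            \<and> (odd (p v) \<longrightarrow> take (Suc (p v)) c \<noteq> take (Suc (p v)) a)"
proof -
  have PP: "Prog V p \<rho> v w \<in> Mset V p" "prog_cond p \<rho> v w (Prog V p \<rho> v w)"
    using Prog_props[OF fin] by blast+
  obtain g where g: "Prog V p \<rho> v w = Tup g"
    using ge rv by (cases "Prog V p \<rho> v w") (auto simp: ge_at_def)
  have gle: "lex_le (take (Suc (p v)) g) (take (Suc (p v)) a)"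
    using ge rv g by (simp add: ge_at_def)
  have ga: "length g = dim V p" "\<forall>x\<in>set g. x < Suc (card V)"
    using Mset_Tup[OF fin] PP(1) g by metis+
  have aa: "length a = dim V p" "\<forall>x\<in>set a. x < Suc (card V)"
    using Mset_Tup[OF fin rv(2)] by auto
  show ?thesis
  proof (cases "even (p v)")
    case True
    then have "le_at (p v) (\<rho> w) (Tup g)" using PP(2) g by (simp add: prog_cond_def ge_at_def)
    then obtain c where c: "\<rho> w = Tup c" "lex_le (take (Suc (p v)) c) (take (Suc (p v)) g)"
      by (cases "\<rho> w") auto
    have cc: "length c = dim V p" "\<forall>x\<in>set c. x < Suc (card V)"
      using Mset_Tup[OF fin] rw c(1) by metis+
    have "lex_le (take (Suc (p v)) c) (take (Suc (p v)) a)"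
      by (rule lex_le_trans_b[OF _ _ bnd_take[OF cc(2)] bnd_take[OF ga(2)] bnd_take[OF aa(2)] c(2) gle])
         (simp_all add: cc ga aa)
    then show ?thesis using c True by blast
  next
    case False
    then have "less_at (p v) (\<rho> w) (Tup g)" using PP(2) g by (simp add: prog_cond_def)
    then have "le_at (p v) (\<rho> w) (Tup g)" "\<not> le_at (p v) (Tup g) (\<rho> w)"
      by (auto simp: less_at_def)
    then obtain c where c: "\<rho> w = Tup c" "lex_le (take (Suc (p v)) c) (take (Suc (p v)) g)"
      "\<not> lex_le (take (Suc (p v)) g) (take (Suc (p v)) c)"
      by (cases "\<rho> w") auto
    have cc: "length c = dim V p" "\<forall>x\<in>set c. x < Suc (card V)"
      using Mset_Tup[OF fin] rw c(1) by metis+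
    have "lex_le (take (Suc (p v)) c) (take (Suc (p v)) a)"
      by (rule lex_le_trans_b[OF _ _ bnd_take[OF cc(2)] bnd_take[OF ga(2)] bnd_take[OF aa(2)] c(2) gle])
         (simp_all add: cc ga aa)
    moreover have "take (Suc (p v)) c \<noteq> take (Suc (p v)) a" using c(3) gle by auto
    ultimately show ?thesis using c by blast
  qed
qed

lemma no_inf_descent:
  fixes f :: "nat \<Rightarrow> nat"
  assumes mono: "\<forall>n>N. f (Suc n) \<le> f n" and inf: "\<forall>m. \<exists>n>m. f (Suc n) < f n"
  shows False
proof -
  have mono': "f m \<le> f n" if "N < n" "n \<le> m" for m n
    using that(2,1)
  proof (induction m rule: dec_induct)
    case base then show ?case by simp
  next
    case (step m) then show ?case using mono by (meson le_trans less_le_trans)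
  qed
  have "\<exists>n>N. f n + j \<le> f (Suc N)" for j
  proof (induction j)
    case 0 then show ?case by (intro exI[of _ "Suc N"]) simp
  next
    case (Suc j)
    then obtain n where n: "n > N" "f n + j \<le> f (Suc N)" by blast
    obtain m where m: "m > n" "f (Suc m) < f m" using inf by blast
    have "f m \<le> f n" using mono' n m by simp
    then show ?case using n m by (intro exI[of _ "Suc m"]) auto
  qed
  then show False by (metis add_le_same_cancel2 le_add2 not_less_eq_eq order_trans)
qed

lemma count_chain:
  fixes f :: "nat \<Rightarrow> nat"
  assumes "\<forall>m<K. i \<le> q m \<and> f (Suc m) \<le> f m \<and> (q m = i \<longrightarrow> f (Suc m) < f m)"
  shows "f K + card {m. m < K \<and> q m = i} \<le> f 0"
  using assms
proof (induction K)
  case 0 then show ?case by simp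
next
  case (Suc K)
  have IH: "f K + card {m. m < K \<and> q m = i} \<le> f 0" using Suc by auto
  have st: "f (Suc K) \<le> f K" "q K = i \<longrightarrow> f (Suc K) < f K" using Suc.prems by auto
  show ?case
  proof (cases "q K = i")
    case True
    then have "{m. m < Suc K \<and> q m = i} = insert K {m. m < K \<and> q m = i}" by auto
    then have "card {m. m < Suc K \<and> q m = i} = Suc (card {m. m < K \<and> q m = i})" by simp
    then show ?thesis using IH st True by simp
  next
    case False
    then have "{m. m < Suc K \<and> q m = i} = {m. m < K \<and> q m = i}" using less_Suc_eq by auto
    then show ?thesis using IH st by simp
  qed
qed

lemma dp_0: "\<not> dominated_prefix p \<pi> j 0"
  by (simp add: dominated_prefix_def)

lemma dp_Suc:
  assumes "j < p (\<pi> 0)"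
  shows "dominated_prefix p \<pi> j (Suc k) \<longleftrightarrow> dominated_prefix p (\<lambda>m. \<pi> (Suc m)) j k"
proof -
  have img: "(\<lambda>n. p (\<pi> n)) ` {..<Suc k} = insert (p (\<pi> 0)) ((\<lambda>n. p (\<pi> (Suc n))) ` {..<k})"
    by (simp add: lessThan_Suc_eq_insert_0 image_image)
  show ?thesis
  proof (cases k)
    case 0 then show ?thesis using assms by (simp add: dominated_prefix_def lessThan_Suc)
  next
    case (Suc k')
    then have ne: "(\<lambda>n. p (\<pi> (Suc n))) ` {..<k} \<noteq> {}" by auto
    have "Min ((\<lambda>n. p (\<pi> n)) ` {..<Suc k}) = min (p (\<pi> 0)) (Min ((\<lambda>n. p (\<pi> (Suc n))) ` {..<k}))"
      using img ne by simp
    then show ?thesis using assms Suc unfolding dominated_prefix_def by (auto simp: min_def)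
  qed
qed

lemma pd_Suc:
  assumes "j < p (\<pi> 0)"
  shows "prefix_degree p \<pi> j (Suc k) = prefix_degree p (\<lambda>m. \<pi> (Suc m)) j k"
proof -
  have "{n. n < Suc k \<and> p (\<pi> n) = j} = Suc ` {n. n < k \<and> p (\<pi> (Suc n)) = j}"
  proof
    show "{n. n < Suc k \<and> p (\<pi> n) = j} \<subseteq> Suc ` {n. n < k \<and> p (\<pi> (Suc n)) = j}"
    proof
      fix n assume n: "n \<in> {n. n < Suc k \<and> p (\<pi> n) = j}"
      then obtain n' where "n = Suc n'" using assms by (cases n) auto
      then show "n \<in> Suc ` {n. n < k \<and> p (\<pi> (Suc n)) = j}" using n by auto
    qed
  qed auto
  then show ?thesis unfolding prefix_degree_def by (simp add: card_image)
qed

lemma mdd_shift1: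
  assumes "j < p (\<pi> 0)"
  shows "max_dom_degree p (\<lambda>m. \<pi> (Suc m)) j = max_dom_degree p \<pi> j"
proof -
  have "{prefix_degree p (\<lambda>m. \<pi> (Suc m)) j k | k. dominated_prefix p (\<lambda>m. \<pi> (Suc m)) j k}
      = {prefix_degree p \<pi> j k | k. dominated_prefix p \<pi> j k}"
  proof
    show "{prefix_degree p (\<lambda>m. \<pi> (Suc m)) j k | k. dominated_prefix p (\<lambda>m. \<pi> (Suc m)) j k}
      \<subseteq> {prefix_degree p \<pi> j k | k. dominated_prefix p \<pi> j k}"
    proof
      fix x assume "x \<in> {prefix_degree p (\<lambda>m. \<pi> (Suc m)) j k | k. dominated_prefix p (\<lambda>m. \<pi> (Suc m)) j k}"
      then obtain k where k: "x = prefix_degree p (\<lambda>m. \<pi> (Suc m)) j k"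
        "dominated_prefix p (\<lambda>m. \<pi> (Suc m)) j k" by blast
      then have "x = prefix_degree p \<pi> j (Suc k)" "dominated_prefix p \<pi> j (Suc k)"
        using dp_Suc[of j p \<pi>, OF assms] pd_Suc[of j p \<pi>, OF assms] by auto
      then show "x \<in> {prefix_degree p \<pi> j k | k. dominated_prefix p \<pi> j k}" by blast
    qed
  next
    show "{prefix_degree p \<pi> j k | k. dominated_prefix p \<pi> j k} \<subseteq>
      {prefix_degree p (\<lambda>m. \<pi> (Suc m)) j k | k. dominated_prefix p (\<lambda>m. \<pi> (Suc m)) j k}"
    proof
      fix x assume "x \<in> {prefix_degree p \<pi> j k | k. dominated_prefix p \<pi> j k}"
      then obtain k where k: "x = prefix_degree p \<pi> j k" "dominated_prefix p \<pi> j k" by blast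
      then obtain k' where "k = Suc k'" using dp_0 by (cases k) auto
      then show "x \<in> {prefix_degree p (\<lambda>m. \<pi> (Suc m)) j k | k. dominated_prefix p (\<lambda>m. \<pi> (Suc m)) j k}"
        using k dp_Suc[of j p \<pi>, OF assms] pd_Suc[of j p \<pi>, OF assms] by blast
    qed
  qed
  then show ?thesis unfolding max_dom_degree_def by simp
qed

lemma mdd_shift:
  assumes "\<forall>m<K. j < p (\<pi> m)"
  shows "max_dom_degree p (\<lambda>m. \<pi> (K + m)) j = max_dom_degree p \<pi> j"
  using assms
proof (induction K arbitrary: \<pi>)
  case 0 then show ?case by simp
next
  case (Suc K)
  have "max_dom_degree p (\<lambda>m. (\<lambda>m. \<pi> (Suc m)) (K + m)) j = max_dom_degree p (\<lambda>m. \<pi> (Suc m)) j"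
    using Suc.IH[of "\<lambda>m. \<pi> (Suc m)"] Suc.prems by auto
  also have "... = max_dom_degree p \<pi> j" using mdd_shift1 Suc.prems by auto
  finally show ?case by simp
qed

lemma mdd_gt:
  assumes "r < max_dom_degree p \<pi> i"
  shows "\<exists>K. dominated_prefix p \<pi> i K \<and> r < prefix_degree p \<pi> i K"
proof -
  define S where "S = {prefix_degree p \<pi> i k | k. dominated_prefix p \<pi> i k}"
  have "\<exists>x\<in>S. r < x"
  proof (cases "finite S")
    case True
    then have "Max (insert 0 S) \<in> insert 0 S" by (intro Max_in) auto
    moreover have "r < Max (insert 0 S)" using assms unfolding S_def max_dom_degree_def by simp
    ultimately show ?thesis by auto
  next
    case False
    then show ?thesis using infinite_nat_iff_unbounded by blast
  qed
  then show ?thesis unfolding S_def by blast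
qed

theorem lemma1:
  fixes V :: "'v set" and E :: "('v \<times> 'v) set" and VE :: "'v set"
    and p :: "'v \<Rightarrow> nat" and \<rho> :: "'v \<Rightarrow> mval" and v :: 'v
  assumes "parity_game V E VE p"
    and "game_ppm V E VE p \<rho>"
    and "v \<in> V"
  shows "\<exists>\<sigma>. positional_strategy_even E VE \<sigma> \<and>
           (\<forall>\<pi>. is_play E \<pi> \<and> \<pi> 0 = v \<and> consistent_pos VE \<sigma> \<pi>
                  \<longrightarrow> mle (theta V p \<pi>) (\<rho> v))"
proof -
  have fin: "finite V" and EV: "E \<subseteq> V \<times> V" and VEV: "VE \<subseteq> V"
    using assms(1) unfolding parity_game_def by auto
  have ppm1: "\<forall>u\<in>V. \<rho> u \<in> Mset V p"
    and ppm2: "\<forall>u\<in>VE. \<exists>w\<in>post E u. ge_at (p u) (\<rho> u) (Prog V p \<rho> u w)"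
    and ppm3: "\<forall>u\<in>V - VE. \<forall>w\<in>post E u. ge_at (p u) (\<rho> u) (Prog V p \<rho> u w)"
    using assms(2) unfolding game_ppm_def by auto
  define \<sigma> where "\<sigma> u = (SOME w. w \<in> post E u \<and> ge_at (p u) (\<rho> u) (Prog V p \<rho> u w))" for u
  have \<sigma>: "\<sigma> u \<in> post E u \<and> ge_at (p u) (\<rho> u) (Prog V p \<rho> u (\<sigma> u))" if "u \<in> VE" for u
  proof -
    have "\<exists>w. w \<in> post E u \<and> ge_at (p u) (\<rho> u) (Prog V p \<rho> u w)" using ppm2 that by blast
    then show ?thesis unfolding \<sigma>_def by (rule someI_ex)
  qed
  have "positional_strategy_even E VE \<sigma>" unfolding positional_strategy_even_def using \<sigma> by blast
  moreover have "mle (theta V p \<pi>) (\<rho> v)"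
    if play: "is_play E \<pi>" "\<pi> 0 = v" "consistent_pos VE \<sigma> \<pi>" for \<pi>
  proof -
    have \<pi>V: "\<pi> n \<in> V" for n
    proof (induction n)
      case 0 then show ?case using play assms(3) by simp
    next
      case (Suc n) then show ?case using play(1) EV unfolding is_play_def by blast
    qed
    have stp: "ge_at (p (\<pi> n)) (\<rho> (\<pi> n)) (Prog V p \<rho> (\<pi> n) (\<pi> (Suc n)))" for n
    proof (cases "\<pi> n \<in> VE")
      case True
      then have "\<pi> (Suc n) = \<sigma> (\<pi> n)" using play(3) unfolding consistent_pos_def by blast
      then show ?thesis using \<sigma>[OF True] by simp
    next
      case False
      then have "\<pi> (Suc n) \<in> post E (\<pi> n)" using play(1) unfolding is_play_def post_def by blast
      then show ?thesis using ppm3 False \<pi>V by blast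
    qed
    show ?thesis
    proof (cases "\<rho> v")
      case Top then show ?thesis by simp
    next
      case (Tup a0)
      define R where "R n = untup (\<rho> (\<pi> n))" for n
      have RT: "\<rho> (\<pi> n) = Tup (R n)" for n
      proof (induction n)
        case 0 then show ?case using Tup play(2) R_def by simp
      next
        case (Suc n)
        have "Tup (R n) \<in> Mset V p" using Suc ppm1 \<pi>V by metis
        from step_lemma[OF fin ppm1[rule_format, OF \<pi>V] Suc this stp]
        show ?case unfolding R_def by auto
      qed
      define d where "d = dim V p"
      define b where "b = Suc (card V)"
      have RM: "Tup (R n) \<in> Mset V p" for n using RT ppm1 \<pi>V by metis
      have Rlen: "length (R n) = d" and Rb: "\<forall>x\<in>set (R n). x < b" for n
        using Mset_Tup[OF fin RM] unfolding d_def b_def by auto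
      have pd: "p (\<pi> n) < d" for n
      proof -
        have "p (\<pi> n) \<le> Max (p ` V)" using fin \<pi>V by simp
        then show ?thesis unfolding d_def dim_def by simp
      qed
      have chain: "lex_le (take (Suc (p (\<pi> n))) (R (Suc n))) (take (Suc (p (\<pi> n))) (R n))
          \<and> (odd (p (\<pi> n)) \<longrightarrow> take (Suc (p (\<pi> n))) (R (Suc n)) \<noteq> take (Suc (p (\<pi> n))) (R n))" for n
        using step_lemma[OF fin ppm1[rule_format, OF \<pi>V] RT RM stp, of n] RT[of "Suc n"] by auto
      define F where "F i n = enc b (take (Suc i) (R n))" for i n
      have Fiff: "lex_le (take (Suc i) (R m)) (take (Suc i) (R n)) \<longleftrightarrow> F i m \<le> F i n" for i m n
        unfolding F_def by (rule lex_le_enc) (simp_all add: Rlen bnd_take[OF Rb])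
      have Fmono: "F i (Suc n) \<le> F i n" if "i \<le> p (\<pi> n)" for i n
        using lex_take_mono[OF conjunct1[OF chain] that] Fiff by blast
      have Fstrict: "F i (Suc n) < F i n" if "p (\<pi> n) = i" "odd i" for i n
      proof -
        have c: "lex_le (take (Suc i) (R (Suc n))) (take (Suc i) (R n))"
             "take (Suc i) (R (Suc n)) \<noteq> take (Suc i) (R n)" using chain[of n] that by auto
        then have "\<not> lex_le (take (Suc i) (R n)) (take (Suc i) (R (Suc n)))"
          using lex_le_antisym by blast
        then show ?thesis using Fiff by (meson not_le)
      qed
      have ew: "even_wins p \<pi>"
      proof -
        define Inf where "Inf = {k. \<exists>\<^sub>\<infinity>n. p (\<pi> n) = k}"
        have InfV: "Inf \<subseteq> p ` V"
        proof
          fix k assume "k \<in> Inf"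
          then have "\<exists>\<^sub>\<infinity>n. p (\<pi> n) = k" unfolding Inf_def by simp
          then obtain n where "p (\<pi> n) = k" using INFM_EX by blast
          then show "k \<in> p ` V" using \<pi>V by blast
        qed
        have finI: "finite Inf" using InfV fin finite_subset by blast
        have neI: "Inf \<noteq> {}"
        proof
          assume "Inf = {}"
          then have "\<forall>k\<in>p ` V. (\<forall>\<^sub>\<infinity>n. p (\<pi> n) \<noteq> k)" unfolding Inf_def by auto
          then have "\<forall>\<^sub>\<infinity>n. \<forall>k\<in>p ` V. p (\<pi> n) \<noteq> k" using fin
            by (simp add: MOST_finite_Ball_distrib)
          then obtain m where "\<forall>n>m. \<forall>k\<in>p ` V. p (\<pi> n) \<noteq> k" unfolding MOST_nat by blast
          then show False using \<pi>V[of "Suc m"] by auto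
        qed
        define k where "k = Min Inf"
        have kI: "k \<in> Inf" using finI neI k_def Min_in by blast
        have kmin: "\<forall>j\<in>Inf. k \<le> j" using finI k_def by simp
        show ?thesis
        proof (rule ccontr)
          assume "\<not> even_wins p \<pi>"
          then have ok: "odd k" unfolding even_wins_def k_def Inf_def by simp
          have "\<forall>j\<in>{..<k}. \<forall>\<^sub>\<infinity>n. p (\<pi> n) \<noteq> j" using kmin unfolding Inf_def by force
          then have "\<forall>\<^sub>\<infinity>n. \<forall>j\<in>{..<k}. p (\<pi> n) \<noteq> j"
            by (simp add: MOST_finite_Ball_distrib)
          then obtain N where N: "\<forall>n>N. \<forall>j\<in>{..<k}. p (\<pi> n) \<noteq> j" unfolding MOST_nat by blast
          have geN: "k \<le> p (\<pi> n)" if "n > N" for n 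
          proof (rule ccontr)
            assume "\<not> k \<le> p (\<pi> n)"
            then have "p (\<pi> n) \<in> {..<k}" by simp
            then show False using N that by blast
          qed
          have kinf: "\<forall>m. \<exists>n>m. p (\<pi> n) = k" using kI unfolding Inf_def INFM_nat by simp
          show False
          proof (rule no_inf_descent[of N "F k"])
            show "\<forall>n>N. F k (Suc n) \<le> F k n" using Fmono geN by blast
            show "\<forall>m. \<exists>n>m. F k (Suc n) < F k n"
            proof
              fix m
              obtain n where "n > max m N" "p (\<pi> n) = k" using kinf by blast
              then show "\<exists>n>m. F k (Suc n) < F k n" using Fstrict ok by force
            qed
          qed
        qed
      qed
      define \<Theta> where "\<Theta> n = map (\<lambda>i. if even i then 0 else max_dom_degree p (\<lambda>m. \<pi> (n + m)) i) [0..<d]" for n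
      have th: "theta V p \<pi> = Tup (\<Theta> 0)" using ew unfolding theta_def \<Theta>_def d_def by simp
      have \<Theta>len: "length (\<Theta> n) = d" for n by (simp add: \<Theta>_def)
      have \<Theta>nth: "\<Theta> n ! j = (if even j then 0 else max_dom_degree p (\<lambda>m. \<pi> (n + m)) j)"
        if "j < d" for n j
        using that by (simp add: \<Theta>_def)
      have claim: "\<forall>n. lex_le (take i (\<Theta> n)) (take i (R n))" if "i \<le> d" for i
        using that
      proof (induction i)
        case 0 then show ?case by (simp add: lex_le_def)
      next
        case (Suc i)
        then have id: "i < d" and IH: "\<forall>n. lex_le (take i (\<Theta> n)) (take i (R n))" by auto
        show ?case
        proof
          fix n
          have "take i (\<Theta> n) \<noteq> take i (R n) \<or> \<Theta> n ! i \<le> R n ! i"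
          proof (rule ccontr)
            assume "\<not> (take i (\<Theta> n) \<noteq> take i (R n) \<or> \<Theta> n ! i \<le> R n ! i)"
            then have eqt: "take i (\<Theta> n) = take i (R n)" and gt: "R n ! i < \<Theta> n ! i" by auto
            then have oi: "odd i" using \<Theta>nth[OF id] by (auto split: if_splits)
            then have "R n ! i < max_dom_degree p (\<lambda>m. \<pi> (n + m)) i" using gt \<Theta>nth[OF id] by simp
            then obtain K where dpK: "dominated_prefix p (\<lambda>m. \<pi> (n + m)) i K"
               and DK: "R n ! i < prefix_degree p (\<lambda>m. \<pi> (n + m)) i K" using mdd_gt by blast
            have geK: "\<forall>m<K. i \<le> p (\<pi> (n + m))"
            proof (intro allI impI)
              fix m assume "m < K"
              then have "Min ((\<lambda>m. p (\<pi> (n + m))) ` {..<K}) \<le> p (\<pi> (n + m))" by (intro Min_le) auto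
              then show "i \<le> p (\<pi> (n + m))" using dpK unfolding dominated_prefix_def by simp
            qed
            have "(\<lambda>m. F i (n + m)) K + card {m. m < K \<and> p (\<pi> (n + m)) = i} \<le> (\<lambda>m. F i (n + m)) 0"
            proof (rule count_chain)
              show "\<forall>m<K. i \<le> p (\<pi> (n + m)) \<and> F i (n + Suc m) \<le> F i (n + m)
                  \<and> (p (\<pi> (n + m)) = i \<longrightarrow> F i (n + Suc m) < F i (n + m))"
              proof (intro allI impI conjI)
                fix m assume m: "m < K"
                show "i \<le> p (\<pi> (n + m))" using geK m by blast
                show "F i (n + Suc m) \<le> F i (n + m)" using Fmono geK m by simp
                assume pe: "p (\<pi> (n + m)) = i"
                show "F i (n + Suc m) < F i (n + m)" using Fstrict[OF pe oi] by simp
              qed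
            qed
            then have cnt: "F i (n + K) + prefix_degree p (\<lambda>m. \<pi> (n + m)) i K \<le> F i n"
              unfolding prefix_degree_def by simp
            define G where "G x = enc b (take i (R x))" for x
            have FG: "F i x = G x * b + R x ! i" for x
              unfolding F_def G_def using Rlen id by (simp add: take_Suc_conv_app_nth enc_snoc)
            have "G (n + K) < G n"
            proof (rule ccontr)
              assume "\<not> G (n + K) < G n"
              then have "G n * b \<le> G (n + K) * b" by simp
              then show False using cnt FG[of n] FG[of "n+K"] DK by linarith
            qed
            then have nle: "\<not> lex_le (take i (R n)) (take i (R (n + K)))"
              using lex_le_enc[of "take i (R n)" "take i (R (n + K))" b] Rlen bnd_take[OF Rb]
              unfolding G_def by auto
            have "take i (\<Theta> (n + K)) = take i (\<Theta> n)"
            proof (rule nth_equalityI)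
              show "length (take i (\<Theta> (n + K))) = length (take i (\<Theta> n))" using \<Theta>len by simp
              fix j assume "j < length (take i (\<Theta> (n + K)))"
              then have j: "j < i" "j < d" using \<Theta>len id by auto
              have "max_dom_degree p (\<lambda>m. \<pi> (n + K + m)) j = max_dom_degree p (\<lambda>m. \<pi> (n + m)) j"
              proof -
                have sh: "\<forall>m<K. j < p (\<pi> (n + m))" using geK j by (meson less_le_trans)
                have "max_dom_degree p (\<lambda>m. (\<lambda>m. \<pi> (n + m)) (K + m)) j = max_dom_degree p (\<lambda>m. \<pi> (n + m)) j"
                  by (rule mdd_shift) (simp add: sh)
                then show ?thesis by (simp add: add.assoc)
              qed
              then show "take i (\<Theta> (n + K)) ! j = take i (\<Theta> n) ! j" using j \<Theta>nth by simp
            qed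
            then have "lex_le (take i (R n)) (take i (R (n + K)))"
              using IH[rule_format, of "n + K"] eqt by simp
            then show False using nle by blast
          qed
          then show "lex_le (take (Suc i) (\<Theta> n)) (take (Suc i) (R n))"
            using lex_le_take_Suc[OF IH[rule_format, of n]] id \<Theta>len Rlen by auto
        qed
      qed
      have "lex_le (\<Theta> 0) (R 0)" using claim[of d] \<Theta>len Rlen by simp
      then show ?thesis using th Tup play(2) RT[of 0] by simp
    qed
  qed
  ultimately show ?thesis by blast
qed

end
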